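(* In the ternary soft heap with threshold $r_0=\max(2,\lceil\lg(1/\epsilon)\rceil)$, for every item $e$ stored at a node of rank $r$, $|C(e)|\le c_r$ where $c_r=0$ for $r\le r_0$ and $c_r=2^{r-r_0}-1$ for $r>r_0$.
   Context: Ternary soft heap with error parameter $0<\epsilon<1$ and threshold $r_0=\max(2,\lceil\lg(1/\epsilon)\rceil)$ ($\lg$ = binary logarithm). Items are (key, value) pairs with distinct keys from a totally ordered universe. A rank-$r$ tree is a perfectly balanced rooted tree in which every internal node has exactly $3$ children and all $3^r$ leaves are at depth $r$; a node whose subtree has height $r$ has rank $r$. Each leaf corresponds to a distinct insertion. Each node holds at most one item (it may be empty); the tree is heap-ordered (an item's key is at most the keys of items at descendants). Each item $e$ held at a node carries a corruption-set $C(e)$ (empty when inserted). The heap is a list of trees in nondecreasing rank order, with at most $2$ trees of each rank, together with suffix-min references to roots. \textsf{insert}$(e)$: add a rank-$0$ tree holding $e$ at the front; while the first three trees have equal rank $r$, link them: create a new node of rank $r+1$ with the three roots as children and fill it. Filling an empty node $v$ of rank $r$: a single pull moves to $v$ the minimum-key item among $v$'s children and then recursively fills the child it came from (a node whose subtree holds no items stays empty). If $r\le r_0$, $v$ is filled by one pull; if $r>r_0$, two items $e_1,e_2$ with $\mathrm{key}(e_1)\le\mathrm{key}(e_2)$ are pulled up successively, $e_1$ and all of $C(e_1)$ are added to $C(e_2)$ ($e_1$ becomes corrupted), and $e_2$ is stored at $v$ (if only one item is available, it is stored). \textsf{extract-min}: let $e$ be the minimum-key item among roots; if $C(e)\neq\emptyset$,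 remove and return an item of $C(e)$ with current key $\mathrm{key}(e)$; otherwise remove $e$, refill its root, update suffix-min references, and return $e$ with the corruptions created. Corrupted items are exactly those in corruption-sets; an item in $C(e')$ has current key $\mathrm{key}(e')$. *)

theory Defs
  imports Complex_Main
begin

text \<open>A node holds an optional item together with
  its corruption-set (a set of items).  Suffix-min references are pure caches
  of the minimum root and are not modelled.\<close>

type_synonym ('k, 'v) item = "'k \<times> 'v"
type_synonym ('k, 'v) content = "(('k, 'v) item \<times> ('k, 'v) item set) option"

datatype ('k, 'v) stree = T "('k, 'v) content" "('k, 'v) stree list"

fun root :: "('k, 'v) stree \<Rightarrow> ('k, 'v) content" where
  "root (T x cs) = x"

fun kids :: "('k, 'v) stree \<Rightarrow> ('k, 'v) stree list" where
  "kids (T x cs) = cs"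

definition ckey :: "('k, 'v) content \<Rightarrow> 'k" where
  "ckey x = fst (fst (the x))"

definition pull_with ::
  "(('k::linorder, 'v) stree \<Rightarrow> ('k, 'v) stree) \<Rightarrow> ('k, 'v) stree list
     \<Rightarrow> ('k, 'v) content \<times> ('k, 'v) stree list" where
  "pull_with f cs =
     (let I = {i. i < length cs \<and> root (cs ! i) \<noteq> None} in
      if I = {} then (None, cs)
      else (let i = (ARG_MIN (\<lambda>i. ckey (root (cs ! i))) i. i \<in> I) in
            (root (cs ! i), cs[i := f (T None (kids (cs ! i)))])))"

fun fill :: "nat \<Rightarrow> nat \<Rightarrow> ('k::linorder, 'v) stree \<Rightarrow> ('k, 'v) stree" where
  "fill r0 0 t = t"
| "fill r0 (Suc r) (T x cs) =
     (if Suc r \<le> r0 then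
        (case pull_with (fill r0 r) cs of (e, cs') \<Rightarrow> T e cs')
      else
        (case pull_with (fill r0 r) cs of
           (None, cs1) \<Rightarrow> T None cs1
         | (Some (e1, C1), cs1) \<Rightarrow>
             (case pull_with (fill r0 r) cs1 of
                (None, cs2) \<Rightarrow> T (Some (e1, C1)) cs2
              | (Some (e2, C2), cs2) \<Rightarrow> T (Some (e2, C2 \<union> insert e1 C1)) cs2)))"

type_synonym ('k, 'v) sheap = "(nat \<times> ('k, 'v) stree) list"

fun carry :: "nat \<Rightarrow> ('k::linorder, 'v) sheap \<Rightarrow> ('k, 'v) sheap" where
  "carry r0 ((r1, t1) # (r2, t2) # (r3, t3) # rest) =
     (if r1 = r2 \<and> r2 = r3
      then carry r0 ((Suc r1, fill r0 (Suc r1) (T None [t1, t2, t3])) # rest)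
      else (r1, t1) # (r2, t2) # (r3, t3) # rest)"
| "carry r0 h = h"

definition sh_insert :: "nat \<Rightarrow> ('k::linorder, 'v) item \<Rightarrow> ('k, 'v) sheap \<Rightarrow> ('k, 'v) sheap" where
  "sh_insert r0 e h = carry r0 ((0, T (Some (e, {})) []) # h)"

fun node_items :: "nat \<Rightarrow> ('k, 'v) stree \<Rightarrow> (nat \<times> ('k, 'v) item \<times> ('k, 'v) item set) set" where
  "node_items r (T x cs) =
     (case x of None \<Rightarrow> {} | Some (e, C) \<Rightarrow> {(r, e, C)}) \<union> (\<Union>c\<in>set cs. node_items (r - 1) c)"

definition heap_items :: "('k, 'v) sheap \<Rightarrow> ('k, 'v) item set" where
  "heap_items h = (\<Union>(r, t)\<in>set h. \<Union>(r', e, C)\<in>node_items r t. insert e C)"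

text \<open>One extract-min step (nondeterministic only in the choice of the corrupted item
  returned).  \<open>i\<close> is the position of the tree whose root holds the minimum-key item.\<close>
inductive extract_step :: "nat \<Rightarrow> ('k::linorder, 'v) sheap \<Rightarrow> ('k, 'v) sheap \<Rightarrow> bool"
  for r0 where
  corrupted:
    "\<lbrakk> i < length h; h ! i = (r, T (Some (e, C)) cs);
       \<forall>j < length h. root (snd (h ! j)) \<noteq> None \<longrightarrow> fst e \<le> ckey (root (snd (h ! j)));
       x \<in> C \<rbrakk>
     \<Longrightarrow> extract_step r0 h (h[i := (r, T (Some (e, C - {x})) cs)])"
| clean:
    "\<lbrakk> i < length h; h ! i = (r, T (Some (e, {})) cs);
       \<forall>j < length h. root (snd (h ! j)) \<noteq> None \<longrightarrow> fst e \<le> ckey (root (snd (h ! j))) \<rbrakk>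
     \<Longrightarrow> extract_step r0 h (h[i := (r, fill r0 r (T None cs))])"

inductive reachable :: "nat \<Rightarrow> ('k::linorder, 'v) sheap \<Rightarrow> bool" for r0 where
  empty: "reachable r0 []"
| ins: "\<lbrakk> reachable r0 h; fst e \<notin> fst ` heap_items h \<rbrakk> \<Longrightarrow> reachable r0 (sh_insert r0 e h)"
| ext: "\<lbrakk> reachable r0 h; extract_step r0 h h' \<rbrakk> \<Longrightarrow> reachable r0 h'"

definition threshold :: "real \<Rightarrow> nat" where
  "threshold eps = max 2 (nat \<lceil>log 2 (1 / eps)\<rceil>)"

definition cbound :: "nat \<Rightarrow> nat \<Rightarrow> nat" where
  "cbound r0 r = (if r \<le> r0 then 0 else 2 ^ (r - r0) - 1)"

end

theory Submission
  imports Defs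
begin

definition okc :: "nat \<Rightarrow> nat \<Rightarrow> ('k, 'v) content \<Rightarrow> bool" where
  "okc r0 r x = (case x of None \<Rightarrow> True | Some (e, C) \<Rightarrow> finite C \<and> card C \<le> cbound r0 r)"

definition sinv :: "nat \<Rightarrow> nat \<Rightarrow> ('k, 'v) stree \<Rightarrow> bool" where
  "sinv r0 r t = (\<forall>(r', e, C)\<in>node_items r t. finite C \<and> card C \<le> cbound r0 r')"

lemma inv_T: "sinv r0 (Suc r) (T x cs) = (okc r0 (Suc r) x \<and> (\<forall>c\<in>set cs. sinv r0 r c))"
  unfolding sinv_def okc_def by (auto split: option.splits)

lemma inv_root: "sinv r0 r t \<Longrightarrow> okc r0 r (root t)"
  by (cases t) (auto simp: sinv_def okc_def split: option.splits)

lemma inv_kids: "sinv r0 r t \<Longrightarrow> sinv r0 r (T None (kids t))"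
  by (cases t) (auto simp: sinv_def)

lemma pull_ok:
  assumes "\<forall>c\<in>set cs. sinv r0 r c"
    and "\<And>c. sinv r0 r c \<Longrightarrow> sinv r0 r (f (T None (kids c)))"
    and "pull_with f cs = (x, cs')"
  shows "okc r0 r x \<and> (\<forall>c\<in>set cs'. sinv r0 r c)"
proof -
  define I where "I = {i. i < length cs \<and> root (cs ! i) \<noteq> None}"
  show ?thesis
  proof (cases "I = {}")
    case True
    then show ?thesis using assms unfolding pull_with_def I_def[symmetric]
      by (auto simp: okc_def)
  next
    case False
    define i where "i = (ARG_MIN (\<lambda>i. ckey (root (cs ! i))) i. i \<in> I)"
    have fI: "finite I" unfolding I_def by auto
    have "i \<in> I" using arg_min_if_finite(1)[OF fI False, of "\<lambda>i. ckey (root (cs ! i))"]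
      unfolding i_def arg_min_on_def .
    hence il: "i < length cs" unfolding I_def by auto
    have "pull_with f cs = (root (cs ! i), cs[i := f (T None (kids (cs ! i)))])"
      using False unfolding pull_with_def Let_def I_def[symmetric] i_def by simp
    hence xe: "x = root (cs ! i)" "cs' = cs[i := f (T None (kids (cs ! i)))]"
      using assms(3) by auto
    have ci: "sinv r0 r (cs ! i)" using assms(1) il by auto
    show ?thesis
      using xe ci assms(1,2) inv_root[OF ci] set_update_subset_insert[of cs i]
      by auto
  qed
qed

lemma cb_le: "r \<le> r0 \<Longrightarrow> cbound r0 r = 0" by (simp add: cbound_def)

lemma cb_step: "\<not> Suc r \<le> r0 \<Longrightarrow> 2 * cbound r0 r + 1 = cbound r0 (Suc r)"
proof -
  assume a: "\<not> Suc r \<le> r0"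
  then obtain k where k: "r = r0 + k" by (metis le_Suc_ex not_less_eq_eq)
  have c1: "cbound r0 r = 2 ^ k - 1" using k by (auto simp: cbound_def)
  have c2: "cbound r0 (Suc r) = 2 ^ Suc k - 1" using k by (auto simp: cbound_def)
  have "(2::nat) ^ k \<ge> 1" by simp
  then have "2 * (2 ^ k - 1) + 1 = (2::nat) * 2 ^ k - 1" by linarith
  then show ?thesis unfolding c1 c2 by simp
qed

lemma fill_inv:
  fixes t :: "('k::linorder, 'v) stree"
  shows "sinv r0 r t \<Longrightarrow> sinv r0 r (fill r0 r t)"
proof (induction r arbitrary: t)
  case 0
  then show ?case by simp
next
  case (Suc r)
  obtain x cs where t: "t = T x cs" by (cases t)
  have cs: "\<forall>c\<in>set cs. sinv r0 r c" using Suc.prems t inv_T by blast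
  have ff: "\<And>c :: ('k, 'v) stree. sinv r0 r c \<Longrightarrow> sinv r0 r (fill r0 r (T None (kids c)))"
    using Suc.IH[OF inv_kids] by blast
  obtain x1 cs1 where p1: "pull_with (fill r0 r) cs = (x1, cs1)" using prod.exhaust by blast
  have o1: "okc r0 r x1" and c1: "\<forall>c\<in>set cs1. sinv r0 r c"
    using pull_ok[OF cs ff p1] by auto
  obtain x2 cs2 where p2: "pull_with (fill r0 r) cs1 = (x2, cs2)" using prod.exhaust by blast
  have o2: "okc r0 r x2" and c2: "\<forall>c\<in>set cs2. sinv r0 r c"
    using pull_ok[OF c1 ff p2] by auto
  show ?case
  proof (cases "Suc r \<le> r0")
    case True
    have "fill r0 (Suc r) t = T x1 cs1" using True p1 t by simp
    moreover have "okc r0 (Suc r) x1" using o1 True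
      by (auto simp: okc_def cb_le split: option.splits)
    ultimately show ?thesis using c1 by (simp add: inv_T)
  next
    case False
    note cb = cb_step[OF False]
    show ?thesis
    proof (cases x1)
      case None
      have "fill r0 (Suc r) t = T None cs1" using False p1 t None by simp
      then show ?thesis using c1 by (simp add: inv_T okc_def)
    next
      case (Some a1)
      obtain e1 C1 where a1: "a1 = (e1, C1)" by fastforce
      have f1: "finite C1" "card C1 \<le> cbound r0 r" using o1 Some a1 by (auto simp: okc_def)
      show ?thesis
      proof (cases x2)
        case None
        have "fill r0 (Suc r) t = T (Some (e1, C1)) cs2" using False p1 p2 t None Some a1 by simp
        moreover have "card C1 \<le> cbound r0 (Suc r)" using f1 cb by linarith
        ultimately show ?thesis using c2 f1 by (simp add: inv_T okc_def)
      next
        case (Some a2)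
        obtain e2 C2 where a2: "a2 = (e2, C2)" by fastforce
        have f2: "finite C2" "card C2 \<le> cbound r0 r" using o2 Some a2 by (auto simp: okc_def)
        have fe: "fill r0 (Suc r) t = T (Some (e2, C2 \<union> insert e1 C1)) cs2"
          using False p1 p2 t Some a2 \<open>x1 = Some a1\<close> a1 by simp
        have "card (C2 \<union> insert e1 C1) \<le> card C2 + card (insert e1 C1)"
          by (rule card_Un_le)
        also have "\<dots> \<le> card C2 + (card C1 + 1)" using f1
          by (simp add: card_insert_if)
        finally have "card (C2 \<union> insert e1 C1) \<le> cbound r0 (Suc r)" using f1 f2 cb by linarith
        then show ?thesis using c2 fe f1 f2 by (simp add: inv_T okc_def)
      qed
    qed
  qed
qed

definition hinv :: "nat \<Rightarrow> ('k, 'v) sheap \<Rightarrow> bool" where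
  "hinv r0 h = (\<forall>(r, t)\<in>set h. sinv r0 r t)"

lemma carry_inv: "hinv r0 h \<Longrightarrow> hinv r0 (carry r0 h)"
proof (induction r0 h rule: carry.induct)
  case (1 r0 r1 t1 r2 t2 r3 t3 rest)
  show ?case
  proof (cases "r1 = r2 \<and> r2 = r3")
    case True
    have "sinv r0 (Suc r1) (T None [t1, t2, t3])"
      using "1.prems" True by (auto simp: hinv_def inv_T okc_def)
    hence "sinv r0 (Suc r1) (fill r0 (Suc r1) (T None [t1, t2, t3]))" by (rule fill_inv)
    hence "hinv r0 ((Suc r1, fill r0 (Suc r1) (T None [t1, t2, t3])) # rest)"
      using "1.prems" by (auto simp: hinv_def)
    then show ?thesis using "1.IH" True by (simp del: fill.simps)
  next
    case False
    have "carry r0 ((r1, t1) # (r2, t2) # (r3, t3) # rest) = (r1, t1) # (r2, t2) # (r3, t3) # rest"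
      by (subst carry.simps(1), subst if_not_P[OF False], rule refl)
    then show ?thesis using "1.prems" by simp
  qed
qed auto

lemma reach_inv: "reachable r0 h \<Longrightarrow> hinv r0 h"
proof (induction rule: reachable.induct)
  case empty
  then show ?case by (simp add: hinv_def)
next
  case (ins h e)
  have "hinv r0 ((0, T (Some (e, {})) []) # h)"
    using ins.IH by (auto simp: hinv_def sinv_def cbound_def)
  then show ?case unfolding sh_insert_def by (rule carry_inv)
next
  case (ext h h')
  from ext.hyps(2) ext.IH show ?case
  proof (cases rule: extract_step.cases)
    case (corrupted i r e C cs x)
    have "sinv r0 r (T (Some (e, C)) cs)" using ext.IH corrupted(2,3)
      unfolding hinv_def by (metis (mono_tags, lifting) case_prodD nth_mem)
    hence "sinv r0 r (T (Some (e, C - {x})) cs)"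
      unfolding sinv_def by (auto intro: le_trans[OF card_mono])
    then show ?thesis using ext.IH corrupted(1) unfolding hinv_def
      by (auto dest!: set_update_subset_insert[THEN subsetD])
  next
    case (clean i r e cs)
    have "sinv r0 r (T (Some (e, {})) cs)" using ext.IH clean(2,3)
      unfolding hinv_def by (metis (mono_tags, lifting) case_prodD nth_mem)
    hence "sinv r0 r (T None cs)" unfolding sinv_def by auto
    hence "sinv r0 r (fill r0 r (T None cs))" by (rule fill_inv)
    then show ?thesis using ext.IH clean(1) unfolding hinv_def
      by (auto dest!: set_update_subset_insert[THEN subsetD])
  qed
qed

theorem mainTheorem10:
  fixes eps :: real and h :: "('k::linorder, 'v) sheap"
  assumes "0 < eps" and "eps < 1"
    and "reachable (threshold eps) h"
    and "(r, t) \<in> set h"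
    and "(r', e, C) \<in> node_items r t"
  shows "finite C \<and> card C \<le> cbound (threshold eps) r'"
  using reach_inv[OF assms(3)] assms(4,5) unfolding hinv_def sinv_def by fastforce

end
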